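(* With the notation of the context, the semigroup $U$ is generated by elements $u\in U$ satisfying $\varphi_u(e)\le 2$ for all $e\in E$. Consequently, under the isomorphism $k[\mathrm{Rep}_{Q,c}(\beta,r)]^{\mathrm{SL}(\beta)}\cong k[U][y_b]_{b\in B}$, the ring of semi-invariants is generated by the monomials corresponding to such $u$ together with the variables $y_b$ (i.e. generators occur in multidegrees with $\varphi_u(e)\le 2$ for all endpoints $e$ and with each band variable of degree at most $1$).
   Context: $k$ algebraically closed; $Q$ acyclic quiver with coloring $c:Q_1\to S$ (each $c^{-1}(s)$ the arrow set of a directed path) such that $kQ/I_c$ is a gentle string algebra ($I_c$ generated by all $ba$ with $ha=tb$, $c(a)=c(b)$). $\beta$ a dimension vector; $\mathfrak{X}$ the set of $(x,s)\in Q_0\times S$ such that an arrow of color $s$ has head or tail $x$; $i(x,s)$, $o(x,s)$ the arrow of color $s$ with head, resp. tail, $x$ (or $\emptyset$). A vertex is lonely if it lies in exactly one pair of $\mathfrak{X}$, coupled if in two. $r$ is a maximal rank sequence: $r:Q_1\to\mathbb{N}$, $r(i(x,s))+r(o(x,s))\le\beta_x$ for all $(x,s)\in\mathfrak{X}$ ($r(\emptyset)=0$), maximal coordinatewise. $\mathrm{Rep}_{Q,c}(\beta,r)$: representations of $kQ/I_c$ of dimension $\beta$ with $\operatorname{rank}V_a\le r(a)$. Partition equivalence graph: vertex set $\Sigma=\{\alpha_i^{(x,s)}:(x,s)\in\mathfrak{X},1\le i\le\beta_x-1\}$, edges (i) $\alpha_i^{(x,s_1)}$—$\alpha_{\beta_x-i}^{(x,s_2)}$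 for coupled $x$ with pairs $(x,s_1),(x,s_2)$, $1\le i\le\beta_x-1$; (ii) $\alpha_i^{(x,s)}$—$\alpha_{\beta_y-i}^{(y,s)}$ for each arrow $a:x\to y$ of color $s$, $1\le i\le r(a)-1$. Path components with at least one edge are strings, cycle components are bands ($B$ = set of bands); $E$ is the set of string endpoints and $\Theta:E\to E$ swaps the endpoints of each string. For $u:Q_1\to\mathbb{N}$ ($u(\emptyset)=0$), $\varphi_u(\alpha_i^{(x,s)})=0$ if $x$ lonely, and $=[i=r(o(x,s))]u(o(x,s))+[i=\beta_x-r(i(x,s))]u(i(x,s))$ if $x$ coupled. $U=\{u:Q_1\to\mathbb{N}:\varphi_u(e)=\varphi_u(\Theta e)\ \forall e\in E\}$. The paper proves $k[\mathrm{Rep}_{Q,c}(\beta,r)]^{\mathrm{SL}(\beta)}\cong k[U][y_b]_{b\in B}$ (polynomial ring in one variable per band over $k[U]$). *)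

theory Defs
  imports Main
begin

definition colored_quiver ::
  "'v set \<Rightarrow> 'a set \<Rightarrow> ('a \<Rightarrow> 'v) \<Rightarrow> ('a \<Rightarrow> 'v) \<Rightarrow> ('a \<Rightarrow> 's) \<Rightarrow> bool" where
  "colored_quiver Q0 Q1 tail head c \<longleftrightarrow>
     finite Q0 \<and> finite Q1 \<and>
     (\<forall>a\<in>Q1. tail a \<in> Q0 \<and> head a \<in> Q0) \<and>
     acyclic {(tail a, head a) | a. a \<in> Q1} \<and>
     (\<forall>s \<in> c ` Q1. \<exists>p. p \<noteq> [] \<and> set p = {a \<in> Q1. c a = s} \<and>
        (\<forall>j. Suc j < length p \<longrightarrow> head (p ! j) = tail (p ! Suc j)))"

text \<open>kQ/I_c is gentle, where I_c is generated by the paths ba (head a = tail b)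
  with c a = c b; so for composable a, b: ba \<in> I_c iff c a = c b.\<close>

definition gentle_coloring ::
  "'v set \<Rightarrow> 'a set \<Rightarrow> ('a \<Rightarrow> 'v) \<Rightarrow> ('a \<Rightarrow> 'v) \<Rightarrow> ('a \<Rightarrow> 's) \<Rightarrow> bool" where
  "gentle_coloring Q0 Q1 tail head c \<longleftrightarrow>
     (\<forall>x\<in>Q0. card {a\<in>Q1. head a = x} \<le> 2 \<and> card {a\<in>Q1. tail a = x} \<le> 2) \<and>
     (\<forall>b\<in>Q1. card {a\<in>Q1. head a = tail b \<and> c a = c b} \<le> 1 \<and>
              card {a\<in>Q1. head a = tail b \<and> c a \<noteq> c b} \<le> 1) \<and>
     (\<forall>a\<in>Q1. card {b\<in>Q1. tail b = head a \<and> c b = c a} \<le> 1 \<and>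
              card {b\<in>Q1. tail b = head a \<and> c b \<noteq> c a} \<le> 1)"

definition gentle_colored_quiver ::
  "'v set \<Rightarrow> 'a set \<Rightarrow> ('a \<Rightarrow> 'v) \<Rightarrow> ('a \<Rightarrow> 'v) \<Rightarrow> ('a \<Rightarrow> 's) \<Rightarrow> bool" where
  "gentle_colored_quiver Q0 Q1 tail head c \<longleftrightarrow>
     colored_quiver Q0 Q1 tail head c \<and> gentle_coloring Q0 Q1 tail head c"

definition Xset ::
  "'v set \<Rightarrow> 'a set \<Rightarrow> ('a \<Rightarrow> 'v) \<Rightarrow> ('a \<Rightarrow> 'v) \<Rightarrow> ('a \<Rightarrow> 's) \<Rightarrow> ('v \<times> 's) set" where
  "Xset Q0 Q1 tail head c =
     {(x, s). x \<in> Q0 \<and> (\<exists>a\<in>Q1. c a = s \<and> (head a = x \<or> tail a = x))}"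

text \<open>i(x,s): arrow of color s with head x; o(x,s): arrow of color s with tail x
  (None plays the role of the empty arrow).\<close>

definition in_arr :: "'a set \<Rightarrow> ('a \<Rightarrow> 'v) \<Rightarrow> ('a \<Rightarrow> 's) \<Rightarrow> 'v \<Rightarrow> 's \<Rightarrow> 'a option" where
  "in_arr Q1 head c x s =
     (if \<exists>a\<in>Q1. c a = s \<and> head a = x then Some (SOME a. a \<in> Q1 \<and> c a = s \<and> head a = x)
      else None)"

definition out_arr :: "'a set \<Rightarrow> ('a \<Rightarrow> 'v) \<Rightarrow> ('a \<Rightarrow> 's) \<Rightarrow> 'v \<Rightarrow> 's \<Rightarrow> 'a option" where
  "out_arr Q1 tail c x s =
     (if \<exists>a\<in>Q1. c a = s \<and> tail a = x then Some (SOME a. a \<in> Q1 \<and> c a = s \<and> tail a = x)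
      else None)"

definition optval :: "('a \<Rightarrow> nat) \<Rightarrow> 'a option \<Rightarrow> nat" where
  "optval f o' = (case o' of None \<Rightarrow> 0 | Some a \<Rightarrow> f a)"

definition lonely ::
  "'v set \<Rightarrow> 'a set \<Rightarrow> ('a \<Rightarrow> 'v) \<Rightarrow> ('a \<Rightarrow> 'v) \<Rightarrow> ('a \<Rightarrow> 's) \<Rightarrow> 'v \<Rightarrow> bool" where
  "lonely Q0 Q1 tail head c x \<longleftrightarrow> card {s. (x, s) \<in> Xset Q0 Q1 tail head c} = 1"

definition coupled ::
  "'v set \<Rightarrow> 'a set \<Rightarrow> ('a \<Rightarrow> 'v) \<Rightarrow> ('a \<Rightarrow> 'v) \<Rightarrow> ('a \<Rightarrow> 's) \<Rightarrow> 'v \<Rightarrow> bool" where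
  "coupled Q0 Q1 tail head c x \<longleftrightarrow> card {s. (x, s) \<in> Xset Q0 Q1 tail head c} = 2"

definition rank_ok ::
  "'v set \<Rightarrow> 'a set \<Rightarrow> ('a \<Rightarrow> 'v) \<Rightarrow> ('a \<Rightarrow> 'v) \<Rightarrow> ('a \<Rightarrow> 's) \<Rightarrow> ('v \<Rightarrow> nat)
    \<Rightarrow> ('a \<Rightarrow> nat) \<Rightarrow> bool" where
  "rank_ok Q0 Q1 tail head c \<beta> r \<longleftrightarrow>
     (\<forall>(x, s) \<in> Xset Q0 Q1 tail head c.
        optval r (in_arr Q1 head c x s) + optval r (out_arr Q1 tail c x s) \<le> \<beta> x)"

definition max_rank_seq ::
  "'v set \<Rightarrow> 'a set \<Rightarrow> ('a \<Rightarrow> 'v) \<Rightarrow> ('a \<Rightarrow> 'v) \<Rightarrow> ('a \<Rightarrow> 's) \<Rightarrow> ('v \<Rightarrow> nat)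
    \<Rightarrow> ('a \<Rightarrow> nat) \<Rightarrow> bool" where
  "max_rank_seq Q0 Q1 tail head c \<beta> r \<longleftrightarrow>
     rank_ok Q0 Q1 tail head c \<beta> r \<and>
     \<not> (\<exists>r'. rank_ok Q0 Q1 tail head c \<beta> r' \<and> (\<forall>a\<in>Q1. r a \<le> r' a) \<and> (\<exists>a\<in>Q1. r a < r' a))"

text \<open>Vertex set Sigma of the partition equivalence graph; (x,s,i) stands for alpha_i^(x,s).\<close>
definition Sigma_pe ::
  "'v set \<Rightarrow> 'a set \<Rightarrow> ('a \<Rightarrow> 'v) \<Rightarrow> ('a \<Rightarrow> 'v) \<Rightarrow> ('a \<Rightarrow> 's) \<Rightarrow> ('v \<Rightarrow> nat)
    \<Rightarrow> ('v \<times> 's \<times> nat) set" where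
  "Sigma_pe Q0 Q1 tail head c \<beta> =
     {(x, s, i). (x, s) \<in> Xset Q0 Q1 tail head c \<and> 1 \<le> i \<and> i \<le> \<beta> x - 1}"

definition pe_adj ::
  "'v set \<Rightarrow> 'a set \<Rightarrow> ('a \<Rightarrow> 'v) \<Rightarrow> ('a \<Rightarrow> 'v) \<Rightarrow> ('a \<Rightarrow> 's) \<Rightarrow> ('v \<Rightarrow> nat)
    \<Rightarrow> ('a \<Rightarrow> nat) \<Rightarrow> ('v \<times> 's \<times> nat) \<Rightarrow> ('v \<times> 's \<times> nat) \<Rightarrow> bool" where
  "pe_adj Q0 Q1 tail head c \<beta> r v w \<longleftrightarrow>
     (\<exists>x s1 s2 i. coupled Q0 Q1 tail head c x \<and>
        (x, s1) \<in> Xset Q0 Q1 tail head c \<and> (x, s2) \<in> Xset Q0 Q1 tail head c \<and> s1 \<noteq> s2 \<and>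
        1 \<le> i \<and> i \<le> \<beta> x - 1 \<and> v = (x, s1, i) \<and> w = (x, s2, \<beta> x - i))
   \<or> (\<exists>a\<in>Q1. \<exists>i. 1 \<le> i \<and> i \<le> r a - 1 \<and>
        ((v = (tail a, c a, i) \<and> w = (head a, c a, \<beta> (head a) - i)) \<or>
         (w = (tail a, c a, i) \<and> v = (head a, c a, \<beta> (head a) - i))))"

text \<open>String endpoints: vertices of degree one (every vertex has degree at most two,
  components are paths and cycles; strings are the path components with an edge).\<close>
definition Ends ::
  "'v set \<Rightarrow> 'a set \<Rightarrow> ('a \<Rightarrow> 'v) \<Rightarrow> ('a \<Rightarrow> 'v) \<Rightarrow> ('a \<Rightarrow> 's) \<Rightarrow> ('v \<Rightarrow> nat)
    \<Rightarrow> ('a \<Rightarrow> nat) \<Rightarrow> ('v \<times> 's \<times> nat) set" where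
  "Ends Q0 Q1 tail head c \<beta> r =
     {v \<in> Sigma_pe Q0 Q1 tail head c \<beta>. card {w. pe_adj Q0 Q1 tail head c \<beta> r v w} = 1}"

definition pe_connected ::
  "'v set \<Rightarrow> 'a set \<Rightarrow> ('a \<Rightarrow> 'v) \<Rightarrow> ('a \<Rightarrow> 'v) \<Rightarrow> ('a \<Rightarrow> 's) \<Rightarrow> ('v \<Rightarrow> nat)
    \<Rightarrow> ('a \<Rightarrow> nat) \<Rightarrow> ('v \<times> 's \<times> nat) \<Rightarrow> ('v \<times> 's \<times> nat) \<Rightarrow> bool" where
  "pe_connected Q0 Q1 tail head c \<beta> r v w \<longleftrightarrow>
     (v, w) \<in> {(p, q). pe_adj Q0 Q1 tail head c \<beta> r p q}\<^sup>*"

definition Theta ::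
  "'v set \<Rightarrow> 'a set \<Rightarrow> ('a \<Rightarrow> 'v) \<Rightarrow> ('a \<Rightarrow> 'v) \<Rightarrow> ('a \<Rightarrow> 's) \<Rightarrow> ('v \<Rightarrow> nat)
    \<Rightarrow> ('a \<Rightarrow> nat) \<Rightarrow> ('v \<times> 's \<times> nat) \<Rightarrow> ('v \<times> 's \<times> nat)" where
  "Theta Q0 Q1 tail head c \<beta> r e =
     (THE e'. e' \<in> Ends Q0 Q1 tail head c \<beta> r \<and> e' \<noteq> e \<and> pe_connected Q0 Q1 tail head c \<beta> r e e')"

definition phi ::
  "'v set \<Rightarrow> 'a set \<Rightarrow> ('a \<Rightarrow> 'v) \<Rightarrow> ('a \<Rightarrow> 'v) \<Rightarrow> ('a \<Rightarrow> 's) \<Rightarrow> ('v \<Rightarrow> nat)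
    \<Rightarrow> ('a \<Rightarrow> nat) \<Rightarrow> ('a \<Rightarrow> nat) \<Rightarrow> ('v \<times> 's \<times> nat) \<Rightarrow> nat" where
  "phi Q0 Q1 tail head c \<beta> r u e =
     (case e of (x, s, i) \<Rightarrow>
       (if lonely Q0 Q1 tail head c x then 0
        else (if i = optval r (out_arr Q1 tail c x s) then optval u (out_arr Q1 tail c x s) else 0)
           + (if i = \<beta> x - optval r (in_arr Q1 head c x s) then optval u (in_arr Q1 head c x s) else 0)))"

definition Usg ::
  "'v set \<Rightarrow> 'a set \<Rightarrow> ('a \<Rightarrow> 'v) \<Rightarrow> ('a \<Rightarrow> 'v) \<Rightarrow> ('a \<Rightarrow> 's) \<Rightarrow> ('v \<Rightarrow> nat)
    \<Rightarrow> ('a \<Rightarrow> nat) \<Rightarrow> ('a \<Rightarrow> nat) set" where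
  "Usg Q0 Q1 tail head c \<beta> r =
     {u. (\<forall>a. a \<notin> Q1 \<longrightarrow> u a = 0) \<and>
         (\<forall>e \<in> Ends Q0 Q1 tail head c \<beta> r.
            phi Q0 Q1 tail head c \<beta> r u e = phi Q0 Q1 tail head c \<beta> r u (Theta Q0 Q1 tail head c \<beta> r e))}"

end

theory Submission
  imports Defs "HOL-Library.Multiset"
begin

definition degm :: "('l \<times> 'p multiset) multiset \<Rightarrow> 'p \<Rightarrow> nat" where
  "degm G p = sum_mset (image_mset (\<lambda>x. count (snd x) p) G)"

lemma degm_empty[simp]: "degm {#} p = 0" by (simp add: degm_def)
lemma degm_add_mset[simp]: "degm (add_mset x G) p = count (snd x) p + degm G p"
  by (simp add: degm_def)
lemma degm_union[simp]: "degm (A + B) p = degm A p + degm B p"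
  by (simp add: degm_def)
lemma degm_mono: "A \<subseteq># B \<Longrightarrow> degm A p \<le> degm B p"
  by (metis degm_union le_add1 subset_mset.add_diff_inverse)
lemma degm_pos: "degm G p > 0 \<Longrightarrow> \<exists>x\<in>#G. count (snd x) p > 0"
  by (induct G) auto

lemma sum_pos_ex: "sum_mset (image_mset (h::'x \<Rightarrow> nat) G) > 0 \<Longrightarrow> \<exists>y\<in>#G. h y > 0"
  by (induct G) auto

lemma sum_ind: "sum_mset (image_mset (\<lambda>x. if P x then 1 else 0) G) = size (filter_mset P G)"
  by (induct G) auto

lemma two_elems_eq:
  assumes "size M \<le> 2" "count M a > 0" "count M b > 0" "a \<noteq> b"
  shows "M = {#a, b#}"
proof -
  have s: "{#a, b#} \<subseteq># M"
    using assms by (simp add: insert_subset_eq_iff in_diff_count)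
  then have "size (M - {#a,b#}) = 0" using assms(1) by (simp add: size_Diff_submset)
  then have "M - {#a,b#} = {#}" by simp
  then show ?thesis using s by (metis subset_mset.diff_add add_0 add.commute subset_mset.add_diff_inverse)
qed

lemma count_two_le_size: "a \<noteq> b \<Longrightarrow> count M a + count M b \<le> size M"
proof (induct M)
  case empty then show ?case by simp
next
  case (add x M) then show ?case by auto
qed

lemma base_case:
  fixes f h :: "'x \<Rightarrow> nat"
  assumes le2: "\<forall>x\<in>#G. f x + h x \<le> 2"
    and eqs: "sum_mset (image_mset f G) = sum_mset (image_mset h G)"
    and ge3: "sum_mset (image_mset f G) \<ge> 3"
    and neq: "\<forall>x\<in>#G. f x \<noteq> h x"
    and nob: "\<not> (\<exists>x\<in>#G. f x = 0 \<and> h x = 1)"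
    and noAB: "\<not> ((\<exists>x\<in>#G. f x = 2 \<and> h x = 0) \<and> (\<exists>x\<in>#G. f x = 0 \<and> h x = 2))"
  shows "\<exists>H. H \<subseteq># G \<and> H \<noteq> {#} \<and> sum_mset (image_mset f H) = sum_mset (image_mset h H)
           \<and> sum_mset (image_mset f H) \<le> 2"
proof -
  have "sum_mset (image_mset h G) > 0" using eqs ge3 by simp
  then obtain y where y: "y \<in># G" "h y > 0" using sum_pos_ex by blast
  have "f y + h y \<le> 2" "f y \<noteq> h y" "\<not> (f y = 0 \<and> h y = 1)" using le2 neq nob y by auto
  then have hy: "h y = 2" "f y = 0" using y(2) by presburger+
  then have noA: "\<forall>x\<in>#G. \<not> (f x = 2 \<and> h x = 0)" using noAB y by auto
  have fx: "\<forall>x\<in>#G. f x = (if f x = 1 \<and> h x = 0 then 1 else 0)"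
  proof
    fix x assume x: "x \<in># G"
    show "f x = (if f x = 1 \<and> h x = 0 then 1 else 0)"
    proof -
      have "f x + h x \<le> 2" "f x \<noteq> h x" "\<not> (f x = 0 \<and> h x = 1)" "\<not> (f x = 2 \<and> h x = 0)"
        using le2 neq nob noA x by auto
      then show ?thesis by presburger
    qed
  qed
  let ?A = "filter_mset (\<lambda>x. f x = 1 \<and> h x = 0) G"
  have "sum_mset (image_mset f G) = sum_mset (image_mset (\<lambda>x. if f x = 1 \<and> h x = 0 then 1 else 0) G)"
    using fx by (intro arg_cong[where f=sum_mset] image_mset_cong) blast
  also have "\<dots> = size ?A" by (rule sum_ind)
  finally have "size ?A \<ge> 3" using ge3 by simp
  then have "?A \<noteq> {#}" by (metis not_numeral_le_zero size_empty)
  then obtain x1 where x1: "x1 \<in># ?A" by (meson multiset_nonemptyE)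
  have "size (?A - {#x1#}) \<ge> 2" using x1 \<open>size ?A \<ge> 3\<close> by (simp add: size_Diff_singleton)
  then have "?A - {#x1#} \<noteq> {#}" by (metis not_numeral_le_zero size_empty)
  then obtain x2 where x2: "x2 \<in># ?A - {#x1#}" by (meson multiset_nonemptyE)
  have s1: "{#x1, x2#} \<subseteq># ?A" using x1 x2 by (simp add: insert_subset_eq_iff)
  have yA: "y \<notin># ?A" using hy by auto
  have s2: "{#x1, x2#} \<subseteq># G" using s1 by (meson multiset_filter_subset subset_mset.order_trans)
  have "y \<in># G - {#x1, x2#}"
  proof -
    have "count {#x1,x2#} y = 0" using s1 yA
      by (metis count_eq_zero_iff mset_subset_eqD)
    then show ?thesis using y(1) by (simp add: in_diff_count)
  qed
  then have "{#y#} \<subseteq># G - {#x1, x2#}" by simp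
  then have "{#y#} + {#x1, x2#} \<subseteq># G" using s2 subset_mset.le_diff_conv2 by blast
  then have "add_mset y {#x1, x2#} \<subseteq># G" by (simp add: add_mset_commute)
  moreover have "f x1 = 1" "h x1 = 0" "f x2 = 1" "h x2 = 0" using x1 x2 by (auto dest: in_diffD)
  ultimately show ?thesis using hy by (intro exI[of _ "add_mset y {#x1, x2#}"]) auto
qed

lemma pair_sub: "x \<in># G \<Longrightarrow> y \<in># G \<Longrightarrow> x \<noteq> y \<Longrightarrow> {#x, y#} \<subseteq># G"
  by (simp add: insert_subset_eq_iff in_diff_count)

lemma base_full:
  fixes f h :: "'x \<Rightarrow> nat"
  assumes le2: "\<forall>x\<in>#G. f x + h x \<le> 2"
    and eqs: "sum_mset (image_mset f G) = sum_mset (image_mset h G)"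
    and ge3: "sum_mset (image_mset f G) \<ge> 3"
  shows "\<exists>H. H \<subseteq># G \<and> H \<noteq> {#} \<and> sum_mset (image_mset f H) = sum_mset (image_mset h H)
           \<and> sum_mset (image_mset f H) \<le> 2"
proof (cases "\<exists>x\<in>#G. f x = h x")
  case True
  then obtain x where x: "x \<in># G" "f x = h x" by blast
  then have "f x \<le> 1" using le2 by fastforce
  then show ?thesis using x by (intro exI[of _ "{#x#}"]) auto
next
  case neq: False
  show ?thesis
  proof (cases "\<exists>x\<in>#G. \<exists>y\<in>#G. f x = 1 \<and> h x = 0 \<and> f y = 0 \<and> h y = 1")
    case True
    then obtain x y where xy: "x \<in># G" "y \<in># G" "f x = 1" "h x = 0" "f y = 0" "h y = 1" by blast
    then have "{#x, y#} \<subseteq># G" by (intro pair_sub) auto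
    then show ?thesis using xy by (intro exI[of _ "{#x, y#}"]) auto
  next
    case nab: False
    show ?thesis
    proof (cases "\<exists>x\<in>#G. \<exists>y\<in>#G. f x = 2 \<and> h x = 0 \<and> f y = 0 \<and> h y = 2")
      case True
      then obtain x y where xy: "x \<in># G" "y \<in># G" "f x = 2" "h x = 0" "f y = 0" "h y = 2" by blast
      then have "{#x, y#} \<subseteq># G" by (intro pair_sub) auto
      then show ?thesis using xy by (intro exI[of _ "{#x, y#}"]) auto
    next
      case nAB: False
      show ?thesis
      proof (cases "\<exists>x\<in>#G. f x = 0 \<and> h x = 1")
        case False
        have n1: "\<not> ((\<exists>x\<in>#G. f x = 2 \<and> h x = 0) \<and> (\<exists>x\<in>#G. f x = 0 \<and> h x = 2))" using nAB by blast
        show ?thesis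
          by (rule base_case[OF le2 eqs ge3]) (use neq False n1 in auto)
      next
        case True
        then have noa: "\<not> (\<exists>x\<in>#G. h x = 0 \<and> f x = 1)" using nab by blast
        have n1: "\<not> ((\<exists>x\<in>#G. h x = 2 \<and> f x = 0) \<and> (\<exists>x\<in>#G. h x = 0 \<and> f x = 2))" using nAB by blast
        have "\<exists>H. H \<subseteq># G \<and> H \<noteq> {#} \<and> sum_mset (image_mset h H) = sum_mset (image_mset f H)
           \<and> sum_mset (image_mset h H) \<le> 2"
          by (rule base_case) (use le2 eqs ge3 neq noa n1 in \<open>auto simp: add.commute\<close>)
        then show ?thesis by metis
      qed
    qed
  qed
qed

lemma C1:
  fixes G :: "('l \<times> 'p multiset) multiset"
  assumes inv: "\<forall>q\<in>P. \<theta> q \<in> P \<and> \<theta> q \<noteq> q \<and> \<theta> (\<theta> q) = q"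
  shows "\<lbrakk>\<forall>x\<in>#G. size (snd x) \<le> 2; \<forall>q\<in>P. degm G q = degm G (\<theta> q); e \<in> P; degm G e \<ge> 3\<rbrakk>
    \<Longrightarrow> \<exists>H. H \<subseteq># G \<and> H \<noteq> {#} \<and> H \<noteq> G \<and> (\<forall>q\<in>P. degm H q = degm H (\<theta> q))"
proof (induction "size G" arbitrary: G rule: less_induct)
  case less
  note sz = less.prems(1) and bal = less.prems(2) and eP = less.prems(3) and e3 = less.prems(4)
  have te: "\<theta> e \<in> P" "\<theta> e \<noteq> e" "\<theta> (\<theta> e) = e" using inv eP by auto
  show ?case
  proof (cases "\<exists>p\<in>P. p \<noteq> e \<and> p \<noteq> \<theta> e \<and> degm G p > 0")
    case True
    then obtain p where p: "p\<in>P" "p \<noteq> e" "p \<noteq> \<theta> e" "degm G p > 0" by blast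
    have tp: "\<theta> p \<in> P" "\<theta> p \<noteq> p" "\<theta>(\<theta> p) = p" using inv p(1) by auto
    have "degm G (\<theta> p) > 0" using bal p by auto
    obtain x1 where x1: "x1 \<in># G" "count (snd x1) p > 0" using degm_pos[OF p(4)] by blast
    obtain x2 where x2: "x2 \<in># G" "count (snd x2) (\<theta> p) > 0" using degm_pos[OF \<open>degm G (\<theta> p) > 0\<close>] by blast
    have balq: "\<And>q. q \<in> P \<Longrightarrow> (q = p \<longleftrightarrow> \<theta> q = \<theta> p) \<and> (q = \<theta> p \<longleftrightarrow> \<theta> q = p)"
      using inv p(1) by metis
    show ?thesis
    proof (cases "count (snd x1) (\<theta> p) > 0")
      case True
      have sx: "snd x1 = {#p, \<theta> p#}"
        using two_elems_eq[of "snd x1" p "\<theta> p"] sz x1 True tp by auto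
      have "\<theta> p \<noteq> e" using p(3) tp(3) by metis
      then have "degm {#x1#} e = 0" using sx p(2) by auto
      then have "{#x1#} \<noteq> G" using e3 by auto
      moreover have "\<forall>q\<in>P. degm {#x1#} q = degm {#x1#} (\<theta> q)"
      proof
        fix q assume q: "q \<in> P"
        have c: "\<And>z. degm {#x1#} z = (if z = p then 1 else 0) + (if z = \<theta> p then 1 else 0)"
          using sx by auto
        show "degm {#x1#} q = degm {#x1#} (\<theta> q)" unfolding c using balq[OF q] by (simp only:)
      qed
      ultimately show ?thesis using x1 by (intro exI[of _ "{#x1#}"]) auto
    next
      case False
      have x12: "x1 \<noteq> x2" using False x2 by auto
      define y where "y = (fst x1, (snd x1 - {#p#}) + (snd x2 - {#\<theta> p#}))"
      define R where "R = G - {#x1, x2#}"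
      define G' where "G' = add_mset y R"
      have sub: "{#x1,x2#} \<subseteq># G" using x1 x2 x12 by (intro pair_sub)
      have "G = R + {#x1,x2#}" unfolding R_def by (rule sym[OF subset_mset.diff_add[OF sub]])
      then have GR: "G = add_mset x1 (add_mset x2 R)" by simp
      have szG': "size G' < size G" unfolding G'_def using GR by simp
      have cy: "\<And>q. count (snd y) q + (if q = p then 1 else 0) + (if q = \<theta> p then 1 else 0)
                   = count (snd x1) q + count (snd x2) q"
        unfolding y_def using x1 x2 tp(2) by auto
      have dG: "degm G q = degm G' q + (if q = p then 1 else 0) + (if q = \<theta> p then 1 else 0)" for q
      proof -
        have "degm G q = count (snd x1) q + count (snd x2) q + degm R q" by (subst GR) simp
        moreover have "degm G' q = count (snd y) q + degm R q" by (simp add: G'_def)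
        ultimately show ?thesis using cy[of q] by linarith
      qed
      have sz': "\<forall>x\<in>#G'. size (snd x) \<le> 2"
      proof
        fix x assume "x \<in># G'"
        then consider "x = y" | "x \<in># R" unfolding G'_def by auto
        then show "size (snd x) \<le> 2"
        proof cases
          case 1
          have "size (snd x1) \<le> 2" "size (snd x2) \<le> 2" using x1 x2 sz by auto
          then have "size (snd x1 - {#p#}) \<le> 1" using x1 by (simp add: size_Diff_singleton)
          moreover have "size (snd x2 - {#\<theta> p#}) \<le> 1" using x2 \<open>size (snd x2) \<le> 2\<close> by (simp add: size_Diff_singleton)
          ultimately show ?thesis using 1 unfolding y_def by simp
        next
          case 2 then show ?thesis using sz GR by auto
        qed
      qed
      have bal': "\<forall>q\<in>P. degm G' q = degm G' (\<theta> q)"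
      proof
        fix q assume q: "q \<in> P"
        have "degm G q = degm G (\<theta> q)" using bal q by auto
        then show "degm G' q = degm G' (\<theta> q)" using dG[of q] dG[of "\<theta> q"] balq[OF q] by auto
      qed
      have "\<theta> p \<noteq> e" using p(3) tp(3) by metis
      then have e3': "degm G' e \<ge> 3" using dG[of e] e3 p(2) by simp
      obtain H' where H': "H' \<subseteq># G'" "H' \<noteq> {#}" "H' \<noteq> G'" "\<forall>q\<in>P. degm H' q = degm H' (\<theta> q)"
        using less.hyps[OF szG' sz' bal' eP e3'] by blast
      show ?thesis
      proof (cases "y \<in># H'")
        case True
        define H where "H = add_mset x1 (add_mset x2 (H' - {#y#}))"
        have H'y: "H' = add_mset y (H' - {#y#})" using True by simp
        have "H' - {#y#} \<subseteq># R" using H'(1) H'y unfolding G'_def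
          by (metis mset_subset_eq_add_mset_cancel)
        then have "H \<subseteq># G" unfolding H_def using GR by simp
        moreover have "size H < size G"
        proof -
          have "size H' < size G'" using H'(1,3) by (simp add: mset_subset_size subset_mset.le_neq_trans)
          moreover have "size H' = Suc (size (H' - {#y#}))" using H'y by (metis size_add_mset)
          ultimately show ?thesis unfolding H_def G'_def using GR by simp
        qed
        moreover have "\<forall>q\<in>P. degm H q = degm H (\<theta> q)"
        proof
          fix q assume q: "q \<in> P"
          have dH: "degm H q = degm H' q + (if q = p then 1 else 0) + (if q = \<theta> p then 1 else 0)" for q
          proof -
            have "degm H q = count (snd x1) q + count (snd x2) q + degm (H' - {#y#}) q" by (simp add: H_def)
            moreover have "degm H' q = count (snd y) q + degm (H' - {#y#}) q" by (subst H'y) simp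
            ultimately show ?thesis using cy[of q] by linarith
          qed
          have "degm H' q = degm H' (\<theta> q)" using H'(4) q by auto
          then show "degm H q = degm H (\<theta> q)" by (simp only: dH balq[OF q])
        qed
        ultimately show ?thesis unfolding H_def by (intro exI[of _ H]) (auto simp: H_def)
      next
        case False
        have "H' \<subseteq># R"
        proof (rule mset_subset_eqI)
          fix a
          show "count H' a \<le> count R a"
          proof (cases "a = y")
            case True then show ?thesis using False by (simp add: not_in_iff)
          next
            case False
            then show ?thesis using H'(1) unfolding G'_def by (metis count_add_mset mset_subset_eq_count)
          qed
        qed
        moreover have "R \<subseteq># G" unfolding R_def by simp
        ultimately have "H' \<subseteq># G" by (rule subset_mset.order_trans)
        moreover have "H' \<noteq> G"
        proof
          assume "H' = G"
          then have "size G \<le> size R" using \<open>H' \<subseteq># R\<close> by (simp add: size_mset_mono)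
          then show False using GR by simp
        qed
        ultimately show ?thesis using H' by blast
      qed
    qed
  next
    case False
    then have z: "\<And>q. q \<in> P \<Longrightarrow> q \<noteq> e \<Longrightarrow> q \<noteq> \<theta> e \<Longrightarrow> degm G q = 0" by auto
    have le2: "\<forall>x\<in>#G. count (snd x) e + count (snd x) (\<theta> e) \<le> 2"
      using sz te count_two_le_size[of e "\<theta> e"] by (metis order.trans)
    obtain H where H: "H \<subseteq># G" "H \<noteq> {#}"
      "sum_mset (image_mset (\<lambda>x. count (snd x) e) H) = sum_mset (image_mset (\<lambda>x. count (snd x) (\<theta> e)) H)"
      "sum_mset (image_mset (\<lambda>x. count (snd x) e) H) \<le> 2"
      using base_full[OF le2] bal eP e3 unfolding degm_def by blast
    have Hb: "degm H e = degm H (\<theta> e)" "degm H e \<le> 2" using H unfolding degm_def by auto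
    have "\<forall>q\<in>P. degm H q = degm H (\<theta> q)"
    proof
      fix q assume q: "q \<in> P"
      show "degm H q = degm H (\<theta> q)"
      proof (cases "q = e \<or> q = \<theta> e")
        case True then show ?thesis using Hb te by auto
      next
        case False
        have tq: "\<theta> q \<in> P" "\<theta> q \<noteq> e" "\<theta> q \<noteq> \<theta> e" using inv q False te by metis+
        have "degm H q = 0" using degm_mono[OF H(1), of q] z[OF q] False by auto
        moreover have "degm H (\<theta> q) = 0" using degm_mono[OF H(1), of "\<theta> q"] z[OF tq(1)] tq by auto
        ultimately show ?thesis by simp
      qed
    qed
    moreover have "H \<noteq> G" using Hb e3 by auto
    ultimately show ?thesis using H by blast
  qed
qed

lemma path_ends:
  fixes adj :: "'v \<Rightarrow> 'v \<Rightarrow> bool"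
  assumes "finite V" "\<forall>v w. adj v w \<longrightarrow> v \<in> V \<and> w \<in> V" "\<forall>v w. adj v w \<longrightarrow> adj w v"
    "\<forall>v. \<not> adj v v" "\<forall>v. card {w. adj v w} \<le> 2" "card {w. adj e w} = 1"
  shows "\<exists>!e'. card {w. adj e' w} = 1 \<and> e' \<noteq> e \<and> (e, e') \<in> {(p,q). adj p q}\<^sup>*"
  using assms
proof (induction "card V" arbitrary: adj V e rule: less_induct)
  case less
  note fin = less.prems(1) and inV = less.prems(2) and sym = less.prems(3)
    and irr = less.prems(4) and deg = less.prems(5) and d1 = less.prems(6)
  obtain w where N: "{x. adj e x} = {w}" using d1 card_1_singletonE by blast
  have aew: "adj e w" using N by auto
  have awe: "adj w e" using sym aew by auto
  have we: "w \<noteq> e" using irr aew by auto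
  have eV: "e \<in> V" using inV aew by auto
  have finN: "\<And>v. finite {x. adj v x}" using fin inV by (metis (no_types, lifting) mem_Collect_eq rev_finite_subset subsetI)
  have ew_only: "\<And>v. adj v e \<longleftrightarrow> v = w" using N sym by blast
  show ?case
  proof (cases "card {x. adj w x} = 1")
    case True
    have Nw: "{x. adj w x} = {e}" using True awe by (metis card_1_singletonE singletonD mem_Collect_eq)
    have comp: "(e, v) \<in> {(p,q). adj p q}\<^sup>* \<Longrightarrow> v = e \<or> v = w" for v
    proof (induction rule: rtrancl_induct)
      case base then show ?case by simp
    next
      case (step y z)
      then show ?case using N Nw by auto
    qed
    show ?thesis
    proof (rule ex1I[of _ w])
      show "card {x. adj w x} = 1 \<and> w \<noteq> e \<and> (e, w) \<in> {(p,q). adj p q}\<^sup>*"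
        using True we aew by auto
    next
      fix v assume "card {x. adj v x} = 1 \<and> v \<noteq> e \<and> (e, v) \<in> {(p,q). adj p q}\<^sup>*"
      then show "v = w" using comp by blast
    qed
  next
    case False
    have "e \<in> {x. adj w x}" using awe by auto
    then have "card {x. adj w x} \<ge> 1" using finN[of w] by (metis card_0_eq empty_iff less_one not_le)
    then have c2: "card {x. adj w x} = 2" using False deg by (metis le_antisym not_less_eq_eq one_add_one plus_1_eq_Suc)
    define adj' where "adj' = (\<lambda>a b. adj a b \<and> a \<noteq> e \<and> b \<noteq> e)"
    define V' where "V' = V - {e}"
    have lt: "card V' < card V" unfolding V'_def using fin eV by (meson card_Diff1_less)
    have N': "\<And>v. v \<noteq> e \<Longrightarrow> {x. adj' v x} = {x. adj v x} - {e}" unfolding adj'_def by auto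
    have N'same: "\<And>v. v \<noteq> e \<Longrightarrow> v \<noteq> w \<Longrightarrow> {x. adj' v x} = {x. adj v x}"
      using N' ew_only sym by blast
    have cw: "card {x. adj' w x} = 1" using N'[OF we] c2 \<open>e \<in> {x. adj w x}\<close> finN[of w] by simp
    have p1: "finite V'" using fin V'_def by simp
    have p2: "\<forall>v w. adj' v w \<longrightarrow> v \<in> V' \<and> w \<in> V'" using inV unfolding adj'_def V'_def by auto
    have p3: "\<forall>v w. adj' v w \<longrightarrow> adj' w v" using sym unfolding adj'_def by auto
    have p4: "\<forall>v. \<not> adj' v v" using irr unfolding adj'_def by auto
    have p5: "\<forall>v. card {x. adj' v x} \<le> 2"
    proof
      fix v show "card {x. adj' v x} \<le> 2"
      proof (cases "v = e")
        case True then show ?thesis unfolding adj'_def by simp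
      next
        case False
        then show ?thesis using N' deg finN by (metis card_Diff1_le le_trans)
      qed
    qed
    obtain w' where w': "card {x. adj' w' x} = 1 \<and> w' \<noteq> w \<and> (w, w') \<in> {(p,q). adj' p q}\<^sup>*"
      and w'u: "\<And>v. card {x. adj' v x} = 1 \<and> v \<noteq> w \<and> (w, v) \<in> {(p,q). adj' p q}\<^sup>* \<Longrightarrow> v = w'"
      using less.hyps[OF lt p1 p2 p3 p4 p5 cw] by metis
    have sub: "{(p,q). adj' p q}\<^sup>* \<subseteq> {(p,q). adj p q}\<^sup>*"
      by (rule rtrancl_mono) (auto simp: adj'_def)
    have noe: "(w, v) \<in> {(p,q). adj' p q}\<^sup>* \<Longrightarrow> v \<noteq> e" for v
    proof (induction rule: rtrancl_induct)
      case base then show ?case using we by simp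
    next
      case (step y z) then show ?case unfolding adj'_def by auto
    qed
    have comp: "(e, v) \<in> {(p,q). adj p q}\<^sup>* \<Longrightarrow> v = e \<or> (w, v) \<in> {(p,q). adj' p q}\<^sup>*" for v
    proof (induction rule: rtrancl_induct)
      case base then show ?case by simp
    next
      case (step y z)
      show ?case
      proof (cases "z = e")
        case True then show ?thesis by simp
      next
        case ze: False
        show ?thesis
        proof (cases "y = e")
          case True
          then have "z = w" using step(2) N by auto
          then show ?thesis by simp
        next
          case False
          then have "(w, y) \<in> {(p,q). adj' p q}\<^sup>*" using step(3) by simp
          moreover have "adj' y z" using step(2) False ze unfolding adj'_def by simp
          ultimately show ?thesis by (simp add: rtrancl_into_rtrancl)
        qed
      qed
    qed
    have w'e: "w' \<noteq> e" using noe w' by blast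
    show ?thesis
    proof (rule ex1I[of _ w'])
      have "card {x. adj w' x} = 1" using w' N'same[OF w'e] by auto
      moreover have "(e, w') \<in> {(p,q). adj p q}\<^sup>*"
      proof -
        have "(w, w') \<in> {(p,q). adj p q}\<^sup>*" using sub w' by blast
        moreover have "(e, w) \<in> {(p,q). adj p q}" using aew by simp
        ultimately show ?thesis by (rule converse_rtrancl_into_rtrancl[rotated])
      qed
      ultimately show "card {x. adj w' x} = 1 \<and> w' \<noteq> e \<and> (e, w') \<in> {(p,q). adj p q}\<^sup>*"
        using w'e by simp
    next
      fix v assume v: "card {x. adj v x} = 1 \<and> v \<noteq> e \<and> (e, v) \<in> {(p,q). adj p q}\<^sup>*"
      then have r: "(w, v) \<in> {(p,q). adj' p q}\<^sup>*" using comp by blast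
      have "v \<noteq> w" using v c2 by auto
      then have "card {x. adj' v x} = 1" using v N'same by auto
      then show "v = w'" using w'u r \<open>v \<noteq> w\<close> by blast
    qed
  qed
qed

locale pe =
  fixes Q0 :: "'v set" and Q1 :: "'a set" and tail head :: "'a \<Rightarrow> 'v"
    and c :: "'a \<Rightarrow> 's" and \<beta> :: "'v \<Rightarrow> nat" and r :: "'a \<Rightarrow> nat"
  assumes cq: "colored_quiver Q0 Q1 tail head c"
    and rk: "rank_ok Q0 Q1 tail head c \<beta> r"
begin

abbreviation "R \<equiv> {(tail a, head a) | a. a \<in> Q1}"

lemma fin0: "finite Q0" and fin1: "finite Q1" and ends0: "\<And>a. a \<in> Q1 \<Longrightarrow> tail a \<in> Q0 \<and> head a \<in> Q0"
  and acyc: "acyclic R"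
  and paths: "\<And>s. s \<in> c ` Q1 \<Longrightarrow> \<exists>p. p \<noteq> [] \<and> set p = {a \<in> Q1. c a = s} \<and>
        (\<forall>j. Suc j < length p \<longrightarrow> head (p ! j) = tail (p ! Suc j))"
  using cq unfolding colored_quiver_def by auto

lemma chain:
  assumes "set p \<subseteq> Q1" "\<forall>j. Suc j < length p \<longrightarrow> head (p ! j) = tail (p ! Suc j)"
  shows "j \<le> k \<Longrightarrow> k < length p \<Longrightarrow> (tail (p ! j), tail (p ! k)) \<in> R\<^sup>*"
proof (induction k)
  case 0 then show ?case by simp
next
  case (Suc k)
  show ?case
  proof (cases "j = Suc k")
    case True then show ?thesis by simp
  next
    case False
    then have "(tail (p ! j), tail (p ! k)) \<in> R\<^sup>*" using Suc by simp
    moreover have "p ! k \<in> Q1" using assms(1) Suc.prems by (meson Suc_lessD nth_mem subsetD)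
    then have "(tail (p ! k), head (p ! k)) \<in> R" by blast
    moreover have "head (p ! k) = tail (p ! Suc k)" using assms(2) Suc.prems by blast
    ultimately show ?thesis by (simp add: rtrancl.rtrancl_into_rtrancl)
  qed
qed

lemma tail_ne_head: "a \<in> Q1 \<Longrightarrow> tail a \<noteq> head a"
  using acyc unfolding acyclic_def by blast

lemma uniq:
  assumes a: "a \<in> Q1" and b: "b \<in> Q1" and cc: "c a = c b"
    and eq: "tail a = tail b \<or> head a = head b"
  shows "a = b"
proof (rule ccontr)
  assume ab: "a \<noteq> b"
  obtain p where p: "set p = {x \<in> Q1. c x = c a}"
    "\<forall>j. Suc j < length p \<longrightarrow> head (p ! j) = tail (p ! Suc j)"
    using paths[of "c a"] a by blast
  have sp: "set p \<subseteq> Q1" using p by auto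
  obtain ja where ja: "ja < length p" "p ! ja = a" using p(1) a by (metis (mono_tags, lifting) in_set_conv_nth mem_Collect_eq)
  obtain jb where jb: "jb < length p" "p ! jb = b" using p(1) b cc by (metis (mono_tags, lifting) in_set_conv_nth mem_Collect_eq)
  have key: "\<And>j k. j < k \<Longrightarrow> k < length p \<Longrightarrow> tail (p ! j) \<noteq> tail (p ! k) \<and> head (p ! j) \<noteq> head (p ! k)"
  proof -
    fix j k assume jk: "j < k" "k < length p"
    have pj: "p ! j \<in> Q1" "p ! k \<in> Q1" using jk sp by auto
    have h: "head (p ! j) = tail (p ! Suc j)" using p(2) jk by auto
    have r1: "(tail (p ! j), head (p ! j)) \<in> R" using pj by blast
    have r2: "(tail (p ! Suc j), tail (p ! k)) \<in> R\<^sup>*" using chain[OF sp p(2)] jk by auto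
    have r3: "(tail (p ! k), head (p ! k)) \<in> R" using pj by blast
    have r1': "(tail (p ! j), tail (p ! Suc j)) \<in> R" using r1 h by simp
    have t1: "(tail (p ! j), tail (p ! k)) \<in> R\<^sup>+" by (rule rtrancl_into_trancl2[OF r1' r2])
    have r2': "(head (p ! j), tail (p ! k)) \<in> R\<^sup>*" using r2 h by simp
    have t2: "(head (p ! j), head (p ! k)) \<in> R\<^sup>+" by (rule rtrancl_into_trancl1[OF r2' r3])
    have "\<forall>x. (x, x) \<notin> R\<^sup>+" using acyc by (simp add: acyclic_def)
    then show "tail (p ! j) \<noteq> tail (p ! k) \<and> head (p ! j) \<noteq> head (p ! k)"
      using t1 t2 by auto
  qed
  have "ja \<noteq> jb" using ab ja jb by auto
  then consider "ja < jb" | "jb < ja" by linarith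
  then show False
  proof cases
    case 1 then show False using key[OF 1 jb(1)] ja jb eq by auto
  next
    case 2 then show False using key[OF 2 ja(1)] ja jb eq by auto
  qed
qed

lemma out_arr_Some: "a \<in> Q1 \<Longrightarrow> tail a = x \<Longrightarrow> c a = s \<Longrightarrow> out_arr Q1 tail c x s = Some a"
proof -
  assume a: "a \<in> Q1" "tail a = x" "c a = s"
  have "(SOME b. b \<in> Q1 \<and> c b = s \<and> tail b = x) = a"
    by (rule some_equality) (use a uniq in auto)
  then show ?thesis unfolding out_arr_def using a by auto
qed

lemma in_arr_Some: "a \<in> Q1 \<Longrightarrow> head a = x \<Longrightarrow> c a = s \<Longrightarrow> in_arr Q1 head c x s = Some a"
proof -
  assume a: "a \<in> Q1" "head a = x" "c a = s"
  have "(SOME b. b \<in> Q1 \<and> c b = s \<and> head b = x) = a"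
    by (rule some_equality) (use a uniq in auto)
  then show ?thesis unfolding in_arr_def using a by auto
qed

lemma out_arr_None: "\<not> (\<exists>a\<in>Q1. tail a = x \<and> c a = s) \<Longrightarrow> out_arr Q1 tail c x s = None"
  unfolding out_arr_def by auto

lemma in_arr_None: "\<not> (\<exists>a\<in>Q1. head a = x \<and> c a = s) \<Longrightarrow> in_arr Q1 head c x s = None"
  unfolding in_arr_def by auto

abbreviation "X \<equiv> Xset Q0 Q1 tail head c"
abbreviation "Sg \<equiv> Sigma_pe Q0 Q1 tail head c \<beta>"
abbreviation "adj \<equiv> pe_adj Q0 Q1 tail head c \<beta> r"

lemma inX: "a \<in> Q1 \<Longrightarrow> (tail a, c a) \<in> X \<and> (head a, c a) \<in> X"
  unfolding Xset_def using ends0 by auto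

lemma rk_at: "(x, s) \<in> X \<Longrightarrow> optval r (in_arr Q1 head c x s) + optval r (out_arr Q1 tail c x s) \<le> \<beta> x"
  using rk unfolding rank_ok_def by auto

lemma r_le_tail: "a \<in> Q1 \<Longrightarrow> r a \<le> \<beta> (tail a)"
  using rk_at[of "tail a" "c a"] inX[of a] out_arr_Some[of a "tail a" "c a"] by (simp add: optval_def)

lemma r_le_head: "a \<in> Q1 \<Longrightarrow> r a \<le> \<beta> (head a)"
  using rk_at[of "head a" "c a"] inX[of a] in_arr_Some[of a "head a" "c a"] by (simp add: optval_def)

lemma r_sum: "a \<in> Q1 \<Longrightarrow> b \<in> Q1 \<Longrightarrow> head a = tail b \<Longrightarrow> c a = c b \<Longrightarrow> r a + r b \<le> \<beta> (head a)"
  using rk_at[of "head a" "c a"] inX[of a] in_arr_Some[of a "head a" "c a"] out_arr_Some[of b "head a" "c a"]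
  by (simp add: optval_def)

lemma adj_cases:
  assumes "adj v w"
  obtains (i) x s1 s2 i where "coupled Q0 Q1 tail head c x" "(x, s1) \<in> X" "(x, s2) \<in> X" "s1 \<noteq> s2"
      "1 \<le> i" "i \<le> \<beta> x - 1" "v = (x, s1, i)" "w = (x, s2, \<beta> x - i)"
  | (fw) a i where "a \<in> Q1" "1 \<le> i" "i \<le> r a - 1" "v = (tail a, c a, i)" "w = (head a, c a, \<beta> (head a) - i)"
  | (bw) a i where "a \<in> Q1" "1 \<le> i" "i \<le> r a - 1" "w = (tail a, c a, i)" "v = (head a, c a, \<beta> (head a) - i)"
  using assms unfolding pe_adj_def by blast

lemma adj_in: "adj v w \<Longrightarrow> v \<in> Sg \<and> w \<in> Sg"
proof (erule adj_cases)
  fix x s1 s2 i assume "(x, s1) \<in> X" "(x, s2) \<in> X" "1 \<le> i" "i \<le> \<beta> x - 1" "v = (x, s1, i)" "w = (x, s2, \<beta> x - i)"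
  then show ?thesis unfolding Sigma_pe_def by auto
next
  fix a i assume a: "a \<in> Q1" "1 \<le> i" "i \<le> r a - 1" and vw: "v = (tail a, c a, i)" "w = (head a, c a, \<beta> (head a) - i)"
  have "r a \<le> \<beta> (tail a)" "r a \<le> \<beta> (head a)" using a r_le_tail r_le_head by auto
  then show ?thesis using inX[OF a(1)] a vw unfolding Sigma_pe_def by auto
next
  fix a i assume a: "a \<in> Q1" "1 \<le> i" "i \<le> r a - 1" and vw: "w = (tail a, c a, i)" "v = (head a, c a, \<beta> (head a) - i)"
  have "r a \<le> \<beta> (tail a)" "r a \<le> \<beta> (head a)" using a r_le_tail r_le_head by auto
  then show ?thesis using inX[OF a(1)] a vw unfolding Sigma_pe_def by auto
qed

lemma adj_irr: "\<not> adj v v"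
proof
  assume "adj v v"
  then show False
    by (rule adj_cases) (use tail_ne_head in \<open>auto; metis\<close>)+
qed

lemma adj_sym: "adj v w \<Longrightarrow> adj w v"
proof (erule adj_cases)
  fix x s1 s2 i assume h: "coupled Q0 Q1 tail head c x" "(x, s1) \<in> X" "(x, s2) \<in> X" "s1 \<noteq> s2" "1 \<le> i" "i \<le> \<beta> x - 1" "v = (x, s1, i)" "w = (x, s2, \<beta> x - i)"
  have "1 \<le> \<beta> x - i" "\<beta> x - i \<le> \<beta> x - 1" "\<beta> x - (\<beta> x - i) = i" using h by auto
  then show "adj w v" unfolding pe_adj_def using h by (intro disjI1) (rule exI[of _ x], rule exI[of _ s2], rule exI[of _ s1], rule exI[of _ "\<beta> x - i"], auto)
next
  fix a i assume "a \<in> Q1" "1 \<le> i" "i \<le> r a - 1" "v = (tail a, c a, i)" "w = (head a, c a, \<beta> (head a) - i)"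
  then show "adj w v" unfolding pe_adj_def by blast
next
  fix a i assume "a \<in> Q1" "1 \<le> i" "i \<le> r a - 1" "w = (tail a, c a, i)" "v = (head a, c a, \<beta> (head a) - i)"
  then show "adj w v" unfolding pe_adj_def by blast
qed

lemma Sg_fin: "finite Sg"
proof -
  have "Sg \<subseteq> Q0 \<times> (c ` Q1) \<times> {..Max (\<beta> ` Q0)}"
  proof
    fix v assume "v \<in> Sg"
    then obtain x s i where v: "v = (x, s, i)" "(x, s) \<in> X" "i \<le> \<beta> x - 1" unfolding Sigma_pe_def by auto
    then have x: "x \<in> Q0" "s \<in> c ` Q1" unfolding Xset_def by auto
    have "\<beta> x \<le> Max (\<beta> ` Q0)" using x fin0 by simp
    then show "v \<in> Q0 \<times> (c ` Q1) \<times> {..Max (\<beta> ` Q0)}" using v x by auto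
  qed
  then show ?thesis using fin0 fin1 by (meson finite_SigmaI finite_atMost finite_imageI rev_finite_subset)
qed

lemma other_color:
  assumes "coupled Q0 Q1 tail head c x" "(x, s) \<in> X" "(x, s2) \<in> X" "s2 \<noteq> s"
  shows "s2 = (SOME s'. (x, s') \<in> X \<and> s' \<noteq> s)"
proof -
  have c2: "card {s'. (x, s') \<in> X} = 2" using assms(1) unfolding coupled_def by simp
  then have fin: "finite {s'. (x, s') \<in> X}" by (metis card.infinite zero_neq_numeral)
  have "{s, s2} \<subseteq> {s'. (x, s') \<in> X}" using assms by auto
  moreover have "card {s, s2} = 2" using assms(4) by simp
  ultimately have eq: "{s, s2} = {s'. (x, s') \<in> X}" using c2 fin by (metis card_subset_eq)
  show ?thesis
    by (rule sym, rule some_equality) (use assms eq in auto)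
qed

lemma adj_card: "card {w. adj v w} \<le> 2"
proof -
  obtain x s j where v: "v = (x, s, j)" by (cases v) auto
  define wi where "wi = (x, (SOME s'. (x, s') \<in> X \<and> s' \<noteq> s), \<beta> x - j)"
  define oa where "oa = (SOME a. a \<in> Q1 \<and> tail a = x \<and> c a = s)"
  define ia where "ia = (SOME a. a \<in> Q1 \<and> head a = x \<and> c a = s)"
  define wii where "wii = (if (\<exists>a\<in>Q1. tail a = x \<and> c a = s \<and> j \<le> r a - 1)
      then (head oa, s, \<beta> (head oa) - j) else (tail ia, s, \<beta> x - j))"
  have oaI: "\<And>a. a \<in> Q1 \<Longrightarrow> tail a = x \<Longrightarrow> c a = s \<Longrightarrow> oa = a"
    unfolding oa_def by (rule some_equality) (use uniq in auto)
  have iaI: "\<And>a. a \<in> Q1 \<Longrightarrow> head a = x \<Longrightarrow> c a = s \<Longrightarrow> ia = a"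
    unfolding ia_def by (rule some_equality) (use uniq in auto)
  have sub: "{w. adj v w} \<subseteq> {wi, wii}"
  proof
    fix w assume "w \<in> {w. adj v w}"
    then have "adj v w" by simp
    then show "w \<in> {wi, wii}"
    proof (rule adj_cases)
      fix x' s1 s2 i assume h: "coupled Q0 Q1 tail head c x'" "(x', s1) \<in> X" "(x', s2) \<in> X" "s1 \<noteq> s2"
        "1 \<le> i" "i \<le> \<beta> x' - 1" "v = (x', s1, i)" "w = (x', s2, \<beta> x' - i)"
      then have "x' = x" "s1 = s" "i = j" using v by auto
      then show ?thesis using other_color[of x s s2] h unfolding wi_def by auto
    next
      fix a i assume h: "a \<in> Q1" "1 \<le> i" "i \<le> r a - 1" "v = (tail a, c a, i)" "w = (head a, c a, \<beta> (head a) - i)"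
      then have "tail a = x" "c a = s" "i = j" using v by auto
      then show ?thesis using h oaI[of a] unfolding wii_def by auto
    next
      fix a i assume h: "a \<in> Q1" "1 \<le> i" "i \<le> r a - 1" "w = (tail a, c a, i)" "v = (head a, c a, \<beta> (head a) - i)"
      then have hx: "head a = x" "c a = s" "j = \<beta> x - i" using v by auto
      have ra: "r a \<le> \<beta> x" using r_le_head[OF h(1)] hx by simp
      have nc: "\<not> (\<exists>b\<in>Q1. tail b = x \<and> c b = s \<and> j \<le> r b - 1)"
      proof
        assume "\<exists>b\<in>Q1. tail b = x \<and> c b = s \<and> j \<le> r b - 1"
        then obtain b where b: "b \<in> Q1" "tail b = x" "c b = s" "j \<le> r b - 1" by blast
        have "r a + r b \<le> \<beta> x" using r_sum[OF h(1) b(1)] hx b by simp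
        then show False using hx b h ra by linarith
      qed
      have "i = \<beta> x - j" using hx h ra by auto
      then show ?thesis using h hx nc iaI[of a] unfolding wii_def by auto
    qed
  qed
  have "card {w. adj v w} \<le> card {wi, wii}" by (rule card_mono[OF _ sub]) simp
  also have "\<dots> \<le> 2" by (simp add: card_insert_le_m1)
  finally show ?thesis .
qed

abbreviation "En \<equiv> Ends Q0 Q1 tail head c \<beta> r"
abbreviation "Th \<equiv> Theta Q0 Q1 tail head c \<beta> r"

lemma Ends_iff: "e \<in> En \<longleftrightarrow> card {w. adj e w} = 1"
proof
  assume "card {w. adj e w} = 1"
  then obtain w where "adj e w" by (metis card_1_singletonE mem_Collect_eq singletonI)
  then show "e \<in> En" using adj_in \<open>card {w. adj e w} = 1\<close> unfolding Ends_def by auto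
qed (auto simp: Ends_def)

lemma Theta_props:
  assumes e: "e \<in> En"
  shows "Th e \<in> En \<and> Th e \<noteq> e \<and> Th (Th e) = e"
proof -
  have ex1: "\<exists>!e'. e' \<in> En \<and> e' \<noteq> e0 \<and> pe_connected Q0 Q1 tail head c \<beta> r e0 e'" if "e0 \<in> En" for e0
  proof -
    have "\<exists>!e'. card {w. adj e' w} = 1 \<and> e' \<noteq> e0 \<and> (e0, e') \<in> {(p,q). adj p q}\<^sup>*"
      by (rule path_ends[where V = Sg]) (use Sg_fin adj_in adj_sym adj_irr adj_card that Ends_iff in auto)
    then show ?thesis unfolding pe_connected_def Ends_iff .
  qed
  have P1: "Th e \<in> En \<and> Th e \<noteq> e \<and> pe_connected Q0 Q1 tail head c \<beta> r e (Th e)"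
    unfolding Theta_def by (rule theI'[OF ex1[OF e]])
  have symR: "sym ({(p,q). adj p q}\<^sup>*)" by (rule sym_rtrancl) (auto simp: sym_def adj_sym)
  have "pe_connected Q0 Q1 tail head c \<beta> r (Th e) e"
    using P1 symR unfolding pe_connected_def by (meson symD)
  then have q: "e \<in> En \<and> e \<noteq> Th e \<and> pe_connected Q0 Q1 tail head c \<beta> r (Th e) e" using P1 e by auto
  have "Th (Th e) = (THE e'. e' \<in> En \<and> e' \<noteq> Th e \<and> pe_connected Q0 Q1 tail head c \<beta> r (Th e) e')"
    by (rule Theta_def)
  also have "\<dots> = e" by (rule the1_equality[OF ex1 q]) (use P1 in blast)
  finally have "Th (Th e) = e" .
  then show ?thesis using P1 by simp
qed

end

context pe
begin

definition T :: "'a \<Rightarrow> 'v \<times> 's \<times> nat" where "T a = (tail a, c a, r a)"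
definition Hd :: "'a \<Rightarrow> 'v \<times> 's \<times> nat" where "Hd a = (head a, c a, \<beta> (head a) - r a)"
definition ends :: "'a \<Rightarrow> ('v \<times> 's \<times> nat) multiset" where
  "ends a = filter_mset (\<lambda>p. p \<in> En \<and> \<not> lonely Q0 Q1 tail head c (fst p)) {#T a, Hd a#}"
definition Gm :: "('a \<Rightarrow> nat) \<Rightarrow> ('a \<times> ('v \<times> 's \<times> nat) multiset) multiset" where
  "Gm g = (\<Sum>a\<in>Q1. replicate_mset (g a) (a, ends a))"

lemma degm_sum: "degm (sum f A) p = (\<Sum>a\<in>A. degm (f a) p)"
  by (induct A rule: infinite_finite_induct) auto

lemma degm_rep: "degm (replicate_mset n x) p = n * count (snd x) p"
  by (induct n) auto

lemma degm_Gm: "degm (Gm g) p = (\<Sum>a\<in>Q1. g a * count (ends a) p)"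
  unfolding Gm_def degm_sum degm_rep by simp

lemma count_Gm: "count (Gm g) (b, m) = (if b \<in> Q1 \<and> m = ends b then g b else 0)"
proof -
  have "count (Gm g) (b, m) = (\<Sum>a\<in>Q1. if a = b then (if m = ends b then g b else 0) else 0)"
    unfolding Gm_def count_sum by (rule sum.cong) auto
  also have "\<dots> = (if b \<in> Q1 \<and> m = ends b then g b else 0)" using fin1 by (simp add: sum.delta)
  finally show ?thesis .
qed

lemma size_ends: "size (ends a) \<le> 2"
  unfolding ends_def by (rule order.trans[OF size_filter_mset_lesseq]) simp

lemma out_arr_D: "out_arr Q1 tail c x s = Some ob \<Longrightarrow> ob \<in> Q1 \<and> tail ob = x \<and> c ob = s"
proof -
  assume h: "out_arr Q1 tail c x s = Some ob"
  then have ex: "\<exists>a\<in>Q1. c a = s \<and> tail a = x" unfolding out_arr_def by (metis option.distinct(1))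
  have "out_arr Q1 tail c x s = Some (SOME a. a \<in> Q1 \<and> c a = s \<and> tail a = x)"
    unfolding out_arr_def by (rule if_P[OF ex])
  then have "ob = (SOME a. a \<in> Q1 \<and> c a = s \<and> tail a = x)" using h by simp
  moreover have "\<exists>a. a \<in> Q1 \<and> c a = s \<and> tail a = x" using ex by blast
  then have "(SOME a. a \<in> Q1 \<and> c a = s \<and> tail a = x) \<in> Q1 \<and> c (SOME a. a \<in> Q1 \<and> c a = s \<and> tail a = x) = s \<and> tail (SOME a. a \<in> Q1 \<and> c a = s \<and> tail a = x) = x"
    by (rule someI_ex)
  ultimately show ?thesis by simp
qed

lemma in_arr_D: "in_arr Q1 head c x s = Some ob \<Longrightarrow> ob \<in> Q1 \<and> head ob = x \<and> c ob = s"
proof -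
  assume h: "in_arr Q1 head c x s = Some ob"
  then have ex: "\<exists>a\<in>Q1. c a = s \<and> head a = x" unfolding in_arr_def by (metis option.distinct(1))
  have "in_arr Q1 head c x s = Some (SOME a. a \<in> Q1 \<and> c a = s \<and> head a = x)"
    unfolding in_arr_def by (rule if_P[OF ex])
  then have "ob = (SOME a. a \<in> Q1 \<and> c a = s \<and> head a = x)" using h by simp
  moreover have "\<exists>a. a \<in> Q1 \<and> c a = s \<and> head a = x" using ex by blast
  then have "(SOME a. a \<in> Q1 \<and> c a = s \<and> head a = x) \<in> Q1 \<and> c (SOME a. a \<in> Q1 \<and> c a = s \<and> head a = x) = s \<and> head (SOME a. a \<in> Q1 \<and> c a = s \<and> head a = x) = x"
    by (rule someI_ex)
  ultimately show ?thesis by simp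
qed

lemma sumT: "(\<Sum>a\<in>Q1. if T a = (x, s, i) then g a else 0)
    = (if i = optval r (out_arr Q1 tail c x s) then optval g (out_arr Q1 tail c x s) else 0)"
proof (cases "out_arr Q1 tail c x s")
  case None
  then have "\<And>a. a \<in> Q1 \<Longrightarrow> T a \<noteq> (x, s, i)" unfolding T_def using out_arr_Some by (metis option.distinct(1) prod.inject)
  then show ?thesis using None by (simp add: optval_def)
next
  case (Some ob)
  note oD = out_arr_D[OF Some]
  have "(\<Sum>a\<in>Q1. if T a = (x, s, i) then g a else 0) = (\<Sum>a\<in>Q1. if a = ob then (if r ob = i then g ob else 0) else 0)"
  proof (rule sum.cong)
    fix a assume a: "a \<in> Q1"
    show "(if T a = (x, s, i) then g a else 0) = (if a = ob then (if r ob = i then g ob else 0) else 0)"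
      using uniq[of a ob] a oD unfolding T_def by auto
  qed simp
  also have "\<dots> = (if r ob = i then g ob else 0)" using oD fin1 by (simp add: sum.delta)
  finally show ?thesis using Some by (auto simp: optval_def)
qed

lemma sumH: "(\<Sum>a\<in>Q1. if Hd a = (x, s, i) then g a else 0)
    = (if i = \<beta> x - optval r (in_arr Q1 head c x s) then optval g (in_arr Q1 head c x s) else 0)"
proof (cases "in_arr Q1 head c x s")
  case None
  then have "\<And>a. a \<in> Q1 \<Longrightarrow> Hd a \<noteq> (x, s, i)" unfolding Hd_def using in_arr_Some by (metis option.distinct(1) prod.inject)
  then show ?thesis using None by (simp add: optval_def)
next
  case (Some ob)
  note oD = in_arr_D[OF Some]
  have "(\<Sum>a\<in>Q1. if Hd a = (x, s, i) then g a else 0) = (\<Sum>a\<in>Q1. if a = ob then (if \<beta> x - r ob = i then g ob else 0) else 0)"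
  proof (rule sum.cong)
    fix a assume a: "a \<in> Q1"
    show "(if Hd a = (x, s, i) then g a else 0) = (if a = ob then (if \<beta> x - r ob = i then g ob else 0) else 0)"
      using uniq[of a ob] a oD unfolding Hd_def by auto
  qed simp
  also have "\<dots> = (if \<beta> x - r ob = i then g ob else 0)" using oD fin1 by (simp add: sum.delta)
  finally show ?thesis using Some by (auto simp: optval_def)
qed

lemma phi_deg:
  assumes p: "p \<in> En"
  shows "phi Q0 Q1 tail head c \<beta> r g p = degm (Gm g) p"
proof -
  obtain x s i where pe: "p = (x, s, i)" by (cases p) auto
  show ?thesis
  proof (cases "lonely Q0 Q1 tail head c x")
    case True
    then have "\<And>a. count (ends a) p = 0" unfolding ends_def using pe by simp
    then show ?thesis unfolding degm_Gm phi_def using True pe by simp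
  next
    case False
    have ce: "count (ends a) p = (if T a = p then 1 else 0) + (if Hd a = p then 1 else 0)" for a
      unfolding ends_def using p False pe by auto
    have "(\<Sum>a\<in>Q1. g a * count (ends a) p) =
        (\<Sum>a\<in>Q1. (if T a = (x, s, i) then g a else 0) + (if Hd a = (x, s, i) then g a else 0))"
    proof (rule sum.cong)
      fix a assume "a \<in> Q1"
      show "g a * count (ends a) p = (if T a = (x, s, i) then g a else 0) + (if Hd a = (x, s, i) then g a else 0)"
        unfolding ce using pe by (simp add: distrib_left)
    qed simp
    also have "\<dots> = (\<Sum>a\<in>Q1. if T a = (x, s, i) then g a else 0) + (\<Sum>a\<in>Q1. if Hd a = (x, s, i) then g a else 0)"
      by (rule sum.distrib)
    finally show ?thesis unfolding degm_Gm phi_def pe sumT sumH using False by simp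
  qed
qed

lemma phi_add: "phi Q0 Q1 tail head c \<beta> r (\<lambda>a. f a + h a) p
   = phi Q0 Q1 tail head c \<beta> r f p + phi Q0 Q1 tail head c \<beta> r h p"
proof -
  have oa: "\<And>ob. optval (\<lambda>a. f a + h a) ob = optval f ob + optval h ob"
    by (simp add: optval_def split: option.splits)
  obtain x s i where p: "p = (x, s, i)" by (cases p) auto
  show ?thesis unfolding phi_def p prod.case oa by simp
qed

abbreviation "U \<equiv> Usg Q0 Q1 tail head c \<beta> r"
abbreviation "ph \<equiv> phi Q0 Q1 tail head c \<beta> r"

lemma Gm_cong: "(\<And>a. a \<in> Q1 \<Longrightarrow> g a = g' a) \<Longrightarrow> Gm g = Gm g'"
  unfolding Gm_def by (rule sum.cong) auto

lemma keyK:
  assumes u: "u \<in> U" and nz: "\<exists>a\<in>Q1. u a \<noteq> 0"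
  shows "\<exists>g\<in>U. (\<forall>a. g a \<le> u a) \<and> (\<exists>a\<in>Q1. g a \<noteq> 0) \<and> (\<forall>e\<in>En. ph g e \<le> 2)"
proof -
  define S where "S = (\<lambda>g. g \<in> U \<and> (\<forall>a. g a \<le> u a) \<and> (\<exists>a\<in>Q1. g a \<noteq> 0))"
  have "S u" using u nz unfolding S_def by auto
  then obtain g where g: "S g" and gmin: "\<And>g'. S g' \<Longrightarrow> (\<Sum>a\<in>Q1. g a) \<le> (\<Sum>a\<in>Q1. g' a)"
    using ex_has_least_nat[of S u "\<lambda>g. \<Sum>a\<in>Q1. g a"] by blast
  have gU: "g \<in> U" using g unfolding S_def by auto
  have g0: "\<And>a. a \<notin> Q1 \<Longrightarrow> g a = 0" and gbal: "\<And>e. e \<in> En \<Longrightarrow> ph g e = ph g (Th e)"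
    using gU unfolding Usg_def by auto
  have "\<forall>e\<in>En. ph g e \<le> 2"
  proof (rule ccontr)
    assume "\<not> (\<forall>e\<in>En. ph g e \<le> 2)"
    then obtain e where e: "e \<in> En" "ph g e \<ge> 3" by force
    have inv: "\<forall>q\<in>En. Th q \<in> En \<and> Th q \<noteq> q \<and> Th (Th q) = q" using Theta_props by blast
    have sz: "\<forall>x\<in>#Gm g. size (snd x) \<le> 2"
    proof
      fix x assume "x \<in># Gm g"
      then have cx: "count (Gm g) x > 0" by simp
      obtain b m where xb: "x = (b, m)" by (cases x) auto
      have "m = ends b" using cx unfolding xb count_Gm by (auto split: if_splits)
      then show "size (snd x) \<le> 2" using size_ends xb by simp
    qed
    have bal: "\<forall>q\<in>En. degm (Gm g) q = degm (Gm g) (Th q)"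
    proof
      fix q assume q: "q \<in> En"
      have tq: "Th q \<in> En" using Theta_props[OF q] by simp
      show "degm (Gm g) q = degm (Gm g) (Th q)"
        using phi_deg[OF q, of g] phi_deg[OF tq, of g] gbal[OF q] by simp
    qed
    have e3: "degm (Gm g) e \<ge> 3" using e phi_deg[OF e(1), of g] by simp
    obtain H where H: "H \<subseteq># Gm g" "H \<noteq> {#}" "H \<noteq> Gm g" "\<forall>q\<in>En. degm H q = degm H (Th q)"
      using C1[OF inv sz bal e(1) e3] by blast
    define g' where "g' = (\<lambda>a. count H (a, ends a))"
    have cH: "\<And>x. count H x \<le> count (Gm g) x" using H(1) by (simp add: mset_subset_eq_count)
    have g'le: "\<And>a. g' a \<le> g a"
    proof -
      fix a
      have "g' a \<le> count (Gm g) (a, ends a)" unfolding g'_def using cH by simp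
      also have "\<dots> \<le> g a" by (simp add: count_Gm)
      finally show "g' a \<le> g a" .
    qed
    have HG: "H = Gm g'"
    proof (rule multiset_eqI)
      fix x :: "'a \<times> ('v \<times> 's \<times> nat) multiset"
      obtain b m where x: "x = (b, m)" by (cases x) auto
      show "count H x = count (Gm g') x"
      proof (cases "b \<in> Q1 \<and> m = ends b")
        case True then show ?thesis unfolding x count_Gm g'_def by simp
      next
        case False
        have "count (Gm g) x = 0" using False unfolding x count_Gm by (simp only: if_False)
        moreover have "count (Gm g') x = 0" using False unfolding x count_Gm by (simp only: if_False)
        ultimately show ?thesis using cH[of x] by simp
      qed
    qed
    have g'U: "g' \<in> U"
    proof -
      have "\<forall>a. a \<notin> Q1 \<longrightarrow> g' a = 0" using g'le g0 by (metis le_zero_eq)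
      moreover have "\<forall>q\<in>En. ph g' q = ph g' (Th q)"
      proof
        fix q assume q: "q \<in> En"
        have tq: "Th q \<in> En" using Theta_props[OF q] by simp
        show "ph g' q = ph g' (Th q)"
          using phi_deg[OF q, of g'] phi_deg[OF tq, of g'] H(4) q HG by simp
      qed
      ultimately show ?thesis unfolding Usg_def by simp
    qed
    have g'nz: "\<exists>a\<in>Q1. g' a \<noteq> 0"
    proof -
      obtain x where x: "x \<in># H" using H(2) by (meson multiset_nonemptyE)
      obtain b m where xb: "x = (b, m)" by (cases x) auto
      have "count (Gm g') x > 0" using x HG by simp
      then have "b \<in> Q1" "g' b > 0" unfolding xb count_Gm by (auto split: if_splits)
      then show ?thesis by auto
    qed
    have "\<exists>a\<in>Q1. g' a \<noteq> g a"
    proof (rule ccontr)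
      assume "\<not> (\<exists>a\<in>Q1. g' a \<noteq> g a)"
      then have "Gm g' = Gm g" by (intro Gm_cong) auto
      then show False using H(3) HG by simp
    qed
    then obtain a0 where a0: "a0 \<in> Q1" "g' a0 < g a0" using g'le le_neq_implies_less by blast
    have "(\<Sum>a\<in>Q1. g' a) < (\<Sum>a\<in>Q1. g a)"
      by (rule sum_strict_mono_ex1[OF fin1]) (use g'le a0 in auto)
    moreover have "S g'" unfolding S_def using g'U g'nz g'le g by (meson S_def order.trans)
    ultimately show False using gmin[of g'] by simp
  qed
  then show ?thesis using g unfolding S_def by blast
qed

lemma main_loc:
  "\<forall>u \<in> U. \<exists>gs. set gs \<subseteq> {g \<in> U. \<forall>e \<in> En. ph g e \<le> 2} \<and> u = (\<lambda>a. \<Sum>g\<leftarrow>gs. g a)"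
proof
  fix u assume "u \<in> U"
  then show "\<exists>gs. set gs \<subseteq> {g \<in> U. \<forall>e \<in> En. ph g e \<le> 2} \<and> u = (\<lambda>a. \<Sum>g\<leftarrow>gs. g a)"
  proof (induction "\<Sum>a\<in>Q1. u a" arbitrary: u rule: less_induct)
    case less
    have u0: "\<And>a. a \<notin> Q1 \<Longrightarrow> u a = 0" and ubal: "\<And>e. e \<in> En \<Longrightarrow> ph u e = ph u (Th e)"
      using less.prems unfolding Usg_def by auto
    show ?case
    proof (cases "\<exists>a\<in>Q1. u a \<noteq> 0")
      case False
      then have "u = (\<lambda>a. 0)" using u0 by auto
      then show ?thesis by (intro exI[of _ "[]"]) auto
    next
      case True
      obtain g where g: "g \<in> U" "\<And>a. g a \<le> u a" "\<exists>a\<in>Q1. g a \<noteq> 0" "\<forall>e\<in>En. ph g e \<le> 2"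
        using keyK[OF less.prems True] by blast
      have g0: "\<And>a. a \<notin> Q1 \<Longrightarrow> g a = 0" and gbal: "\<And>e. e \<in> En \<Longrightarrow> ph g e = ph g (Th e)"
        using g(1) unfolding Usg_def by auto
      define u' where "u' = (\<lambda>a. u a - g a)"
      have usplit: "u = (\<lambda>a. u' a + g a)" unfolding u'_def using g(2) by (auto simp: fun_eq_iff)
      have u'U: "u' \<in> U"
      proof -
        have "\<forall>a. a \<notin> Q1 \<longrightarrow> u' a = 0" unfolding u'_def using u0 by simp
        moreover have "\<forall>e\<in>En. ph u' e = ph u' (Th e)"
        proof
          fix e assume e: "e \<in> En"
          have "ph u' e + ph g e = ph u' (Th e) + ph g (Th e)"
            using ubal[OF e] unfolding usplit phi_add[symmetric] .
          then show "ph u' e = ph u' (Th e)" using gbal[OF e] by simp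
        qed
        ultimately show ?thesis unfolding Usg_def by simp
      qed
      obtain a0 where a0: "a0 \<in> Q1" "g a0 \<noteq> 0" using g(3) by blast
      have "(\<Sum>a\<in>Q1. u' a) < (\<Sum>a\<in>Q1. u a)"
      proof (rule sum_strict_mono_ex1[OF fin1])
        show "\<forall>a\<in>Q1. u' a \<le> u a" unfolding u'_def by simp
        have "g a0 \<le> u a0" by (rule g(2))
        then have "u' a0 < u a0" unfolding u'_def using a0(2) by simp
        then show "\<exists>a\<in>Q1. u' a < u a" using a0(1) by blast
      qed
      then obtain gs where gs: "set gs \<subseteq> {g \<in> U. \<forall>e \<in> En. ph g e \<le> 2}" "u' = (\<lambda>a. \<Sum>g\<leftarrow>gs. g a)"
        using less.hyps[OF _ u'U] by blast
      have "u = (\<lambda>a. \<Sum>g\<leftarrow>(g # gs). g a)" using usplit gs(2) by (auto simp: fun_eq_iff)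
      moreover have "set (g # gs) \<subseteq> {g \<in> U. \<forall>e \<in> En. ph g e \<le> 2}" using gs(1) g by auto
      ultimately show ?thesis by blast
    qed
  qed
qed

end

theorem corollary9p1:
  fixes Q0 :: "'v set" and Q1 :: "'a set" and tail head :: "'a \<Rightarrow> 'v"
    and c :: "'a \<Rightarrow> 's" and \<beta> :: "'v \<Rightarrow> nat" and r :: "'a \<Rightarrow> nat"
  assumes "gentle_colored_quiver Q0 Q1 tail head c"
    and "max_rank_seq Q0 Q1 tail head c \<beta> r"
  shows "\<forall>u \<in> Usg Q0 Q1 tail head c \<beta> r.
           \<exists>gs. set gs \<subseteq> {g \<in> Usg Q0 Q1 tail head c \<beta> r.
                    \<forall>e \<in> Ends Q0 Q1 tail head c \<beta> r. phi Q0 Q1 tail head c \<beta> r g e \<le> 2}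
               \<and> u = (\<lambda>a. \<Sum>g\<leftarrow>gs. g a)"
proof -
  interpret pe Q0 Q1 tail head c \<beta> r
    using assms unfolding gentle_colored_quiver_def max_rank_seq_def by unfold_locales auto
  show ?thesis by (rule main_loc)
qed

end
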